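(* Let $n\ge3$, let $x_1,\dots,x_n$ be distinct points of $\mathbb{CP}^1$ and let $0<\alpha_i<1$ be real numbers satisfying $\sum_{i}(1-\alpha_i) < 2$ and, for every $1\le j\le n$, $1-\alpha_j < \sum_{i\ne j}(1-\alpha_i)$. Put $a_{i1} = \frac{1-\alpha_i}{2}$ and $a_{i2}=\frac{1+\alpha_i}{2}$. Let $E=\mathcal{O}(1)\oplus\mathcal{O}(n-1)$ over $\mathbb{CP}^1$ and let $F_i\subset E_{x_i}$ be lines such that (i) $F_i\cap \mathcal{O}(n-1)_{x_i}=0$ for all $i$, and (ii) there is no degree $1$ line subbundle $L\subset E$ with $F_i\subset L_{x_i}$ for all $i$. Then the parabolic bundle $E_*$ with flags $F_i$ and weights $a_{i1}<a_{i2}$ at $x_i$ is stable: for every holomorphic line subbundle $L\subset E$, $$\mathrm{pardeg}\, L_* := \deg L - \sum_{i:\,F_i\subset L_{x_i}} a_{i1} - \sum_{i:\,F_i\not\subset L_{x_i}} a_{i2} < 0 .$$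
   Context: The parabolic structure on $E$ is: at each $x_i$, the line $F_i$ carries the smaller weight $a_{i1}$ and the quotient $E_{x_i}/F_i$ carries the larger weight $a_{i2}$; the parabolic degree of $E_*$ is $\deg E - \sum_i (a_{i1}+a_{i2}) = 0$. The induced parabolic structure on a line subbundle $L$ has weight $a_{i1}$ at $x_i$ if $F_i\subset L_{x_i}$ and $a_{i2}$ otherwise, giving the displayed formula for $\mathrm{pardeg}\,L_*$. *)

theory Defs
  imports Complex_Main
begin

text \<open>A point of CP^1 is given by a nonzero representative (s,t) in C^2 of homogeneous
  coordinates.  Using the standard trivialisations by homogeneous coordinates, the
  fibre of O(a) + O(b) at a point with fixed representative (s,t) is identified with C^2.\<close>

definition proj_point :: "complex \<times> complex \<Rightarrow> bool" where
  "proj_point x \<longleftrightarrow> x \<noteq> (0, 0)"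

definition same_proj_point :: "complex \<times> complex \<Rightarrow> complex \<times> complex \<Rightarrow> bool" where
  "same_proj_point x y \<longleftrightarrow> fst x * snd y = snd x * fst y"

definition homog :: "int \<Rightarrow> (complex \<times> complex \<Rightarrow> complex) \<Rightarrow> bool" where
  "homog k f \<longleftrightarrow>
     (if k < 0 then f = (\<lambda>_. 0)
      else (\<exists>c :: nat \<Rightarrow> complex.
              f = (\<lambda>(s, t). \<Sum>j\<le>nat k. c j * s ^ j * t ^ (nat k - j))))"

text \<open>A holomorphic line subbundle L of degree d of E = O(1) + O(n-1) over CP^1 is the image
  of an everywhere injective bundle map O(d) -> O(1) + O(n-1), i.e. a pair (p,q) of
  homogeneous polynomials of degrees 1-d and n-1-d without common zero on CP^1.
  Its fibre at x is the line spanned by (p x, q x).\<close>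
definition line_subbundle ::
  "nat \<Rightarrow> int \<Rightarrow> (complex \<times> complex \<Rightarrow> complex) \<Rightarrow> (complex \<times> complex \<Rightarrow> complex) \<Rightarrow> bool" where
  "line_subbundle n d p q \<longleftrightarrow>
     homog (1 - d) p \<and> homog (int n - 1 - d) q \<and>
     (\<forall>x. proj_point x \<longrightarrow> (p x, q x) \<noteq> (0, 0))"

text \<open>The line spanned by the nonzero vector f in the fibre E_x lies in the fibre L_x.\<close>
definition line_in_fibre ::
  "complex \<times> complex \<Rightarrow> (complex \<times> complex \<Rightarrow> complex) \<Rightarrow> (complex \<times> complex \<Rightarrow> complex)
     \<Rightarrow> complex \<times> complex \<Rightarrow> bool" where
  "line_in_fibre f p q x \<longleftrightarrow> fst f * q x = snd f * p x"

definition pardeg ::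
  "nat \<Rightarrow> (nat \<Rightarrow> complex \<times> complex) \<Rightarrow> (nat \<Rightarrow> complex \<times> complex)
     \<Rightarrow> (nat \<Rightarrow> real) \<Rightarrow> (nat \<Rightarrow> real) \<Rightarrow> int
     \<Rightarrow> (complex \<times> complex \<Rightarrow> complex) \<Rightarrow> (complex \<times> complex \<Rightarrow> complex) \<Rightarrow> real" where
  "pardeg n x F a1 a2 d p q =
     real_of_int d
     - (\<Sum>i\<in>{i\<in>{1..n}. line_in_fibre (F i) p q (x i)}. a1 i)
     - (\<Sum>i\<in>{i\<in>{1..n}. \<not> line_in_fibre (F i) p q (x i)}. a2 i)"

end

theory Submission
  imports Defs
begin

theorem mainTheorem3:
  fixes n :: nat and x :: "nat \<Rightarrow> complex \<times> complex" and F :: "nat \<Rightarrow> complex \<times> complex"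
    and \<alpha> :: "nat \<Rightarrow> real"
  assumes n3: "n \<ge> 3"
    and pts: "\<forall>i\<in>{1..n}. proj_point (x i)"
    and distinct: "\<forall>i\<in>{1..n}. \<forall>j\<in>{1..n}. i \<noteq> j \<longrightarrow> \<not> same_proj_point (x i) (x j)"
    and alpha: "\<forall>i\<in>{1..n}. 0 < \<alpha> i \<and> \<alpha> i < 1"
    and sum_lt: "(\<Sum>i\<in>{1..n}. 1 - \<alpha> i) < 2"
    and tri: "\<forall>j\<in>{1..n}. 1 - \<alpha> j < (\<Sum>i\<in>{1..n} - {j}. 1 - \<alpha> i)"
    and Fnz: "\<forall>i\<in>{1..n}. F i \<noteq> (0, 0)"
    and Fi: "\<forall>i\<in>{1..n}. fst (F i) \<noteq> 0"
    and Fii: "\<not> (\<exists>p q. line_subbundle n 1 p q \<and>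
                       (\<forall>i\<in>{1..n}. line_in_fibre (F i) p q (x i)))"
  shows "\<forall>d p q. line_subbundle n d p q \<longrightarrow>
           pardeg n x F (\<lambda>i. (1 - \<alpha> i) / 2) (\<lambda>i. (1 + \<alpha> i) / 2) d p q < 0"
proof (intro allI impI)
  fix d p q assume L: "line_subbundle n d p q"
  define A where "A = {1..n}"
  define P where "P i \<longleftrightarrow> line_in_fibre (F i) p q (x i)" for i
  define B where "B = (\<Sum>i\<in>A. 1 - \<alpha> i)"
  define T where "T = (\<Sum>i\<in>A. if P i then 0 else \<alpha> i)"
  have fA: "finite A" by (simp add: A_def)
  have key: "pardeg n x F (\<lambda>i. (1 - \<alpha> i) / 2) (\<lambda>i. (1 + \<alpha> i) / 2) d p q
       = real_of_int d - B / 2 - T"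
  proof -
    have "(\<Sum>i\<in>{i\<in>A. P i}. (1 - \<alpha> i) / 2) + (\<Sum>i\<in>{i\<in>A. \<not> P i}. (1 + \<alpha> i) / 2)
        = (\<Sum>i\<in>A. if P i then (1 - \<alpha> i) / 2 else 0) + (\<Sum>i\<in>A. if P i then 0 else (1 + \<alpha> i) / 2)"
      using fA by (simp add: sum.inter_filter, intro sum.cong, auto)
    also have "\<dots> = (\<Sum>i\<in>A. (1 - \<alpha> i) / 2 + (if P i then 0 else \<alpha> i))"
      by (subst sum.distrib[symmetric]) (rule sum.cong, auto simp: field_simps)
    also have "\<dots> = B / 2 + T" by (simp add: sum.distrib B_def T_def sum_divide_distrib)
    finally show ?thesis unfolding pardeg_def A_def P_def by (simp add: A_def)
  qed
  have Bpos: "B > 0"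
  proof -
    have "A \<noteq> {}" using n3 by (auto simp: A_def)
    then show ?thesis unfolding B_def using alpha fA by (intro sum_pos) (auto simp: A_def)
  qed
  have Tnn: "T \<ge> 0" unfolding T_def using alpha by (intro sum_nonneg) (auto simp: A_def less_imp_le)
  have B2: "B < 2" using sum_lt by (simp add: B_def A_def)
  consider "d \<le> 0" | "d = 1" | "d \<ge> 2" by linarith
  then show "pardeg n x F (\<lambda>i. (1 - \<alpha> i) / 2) (\<lambda>i. (1 + \<alpha> i) / 2) d p q < 0"
  proof cases
    case 1 then show ?thesis using key Bpos Tnn by simp
  next
    case 2
    have "\<exists>j\<in>A. \<not> P j"
    proof (rule ccontr)
      assume "\<not> ?thesis"
      then have "\<forall>i\<in>{1..n}. line_in_fibre (F i) p q (x i)" by (auto simp: A_def P_def)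
      then show False using Fii L 2 by blast
    qed
    then obtain j where j: "j \<in> A" "\<not> P j" by blast
    have "T \<ge> (if P j then 0 else \<alpha> j)" unfolding T_def
      using alpha fA j by (intro member_le_sum) (auto simp: A_def less_imp_le)
    then have Tj: "T \<ge> \<alpha> j" using j by simp
    define R where "R = (\<Sum>i\<in>A - {j}. 1 - \<alpha> i)"
    have BR: "B = (1 - \<alpha> j) + R"
      unfolding B_def R_def using fA j by (simp add: sum.remove)
    have tj: "1 - \<alpha> j < R" using tri j by (simp add: A_def R_def)
    have "B > 2 * (1 - \<alpha> j)" unfolding BR using tj by (simp add: algebra_simps)
    then show ?thesis using key Tj 2 by simp
  next
    case 3
    have hp: "homog (1 - d) p" and hq: "homog (int n - 1 - d) q"
      and nz: "\<forall>x. proj_point x \<longrightarrow> (p x, q x) \<noteq> (0, 0)"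
      using L by (auto simp: line_subbundle_def)
    have p0: "p = (\<lambda>_. 0)" using hp 3 by (simp add: homog_def)
    have dn: "d \<le> int n - 1"
    proof (rule ccontr)
      assume "\<not> ?thesis"
      then have "q = (\<lambda>_. 0)" using hq by (simp add: homog_def)
      moreover have "proj_point (1, 0)" by (simp add: proj_point_def)
      ultimately show False using nz p0 by auto
    qed
    have nP: "\<forall>i\<in>A. \<not> P i"
    proof
      fix i assume i: "i \<in> A"
      have "proj_point (x i)" using pts i by (simp add: A_def)
      then have "q (x i) \<noteq> 0" using nz p0 by (metis prod.inject)
      then show "\<not> P i" using Fi i p0 by (auto simp: P_def line_in_fibre_def A_def)
    qed
    have "T = (\<Sum>i\<in>A. \<alpha> i)" unfolding T_def using nP by simp
    also have "\<dots> = real n - B" unfolding B_def by (simp add: sum_subtractf A_def)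
    finally have "T = real n - B" .
    then show ?thesis using key dn B2 by simp
  qed
qed

end
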